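(* Let $g\in\mathbb{I}_{\geq1}$, $c\in\mathbb{I}_{\geq g}$, $b\in\mathbb{I}_{\geq c}$ be integers with $q:=\lceil c/g\rceil\geq2$ and $(q-1)g\leq b$, and let $\psi>0$, $\ell_\beta(\beta):=\psi(b^2-\beta^2)$. Let $\mathbb{X}_p\subseteq\mathbb{R}^{n_p}$, $\mathbb{U}_p\subseteq\mathbb{R}^{m_p}$ be closed sets containing the origin, $f_p:\mathbb{R}^{n_p}\times\mathbb{R}^{m_p}\to\mathbb{R}^{n_p}$ with $f_p(0,0)=0$, $\mathbb{X}_{f,p}\subseteq\mathbb{X}_p$, and $k_p:\mathbb{X}_{f,p}\to\mathbb{U}_p$. Consider the system $x^+=f(x,u)$ with state $x=(x_p,u_s,\beta)$, input $u=(u_c,\gamma,\delta)$, $\gamma,\delta\in\{0,1\}$, $\gamma+\delta\leq 1$, $$f(x,u)=\big(f_p(x_p,(\gamma+\delta)u_c+(1-\gamma-\delta)u_s),\ (\gamma+\delta)u_c+(1-\gamma-\delta)u_s,\ \min\{\beta+(1-\delta)g-\gamma c,\,b\}\big),$$ the terminal control sequence $\kappa_0(x):=(k_p(x_p),0,1)$, $\kappa_j(x):=(0,0,0)$ for $j\in\mathbb{I}_{[1,q-1]}$, $f_0(x):=x$, $f_i(x):=f(f_{i-1}(x),\kappa_{(i-1)\bmod q}(f_{i-1}(x)))$, and let $f_{\beta,i}(x)$ be the last component of $f_i(x)$. Then for every $x\in\mathbb{X}_{f,p}\times\mathbb{U}_p\times\{0\}$, $$\sum_{i=0}^{q-1}\ell_\beta(f_{\beta,i}(x))=\psi\Big(qb^2-\tfrac16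 g^2(q-1)(q-2)(2q-3)\Big).$$
   Context: $\mathbb{I}$ denotes the integers, $\mathbb{I}_{[a,b]}:=\mathbb{I}\cap[a,b]$, $\mathbb{I}_{\geq a}:=\mathbb{I}\cap[a,\infty)$. The component $\beta$ is a token bucket level; $\gamma=1$ is a token-consuming transmission and $\delta=1$ a transmission over a direct link that consumes no tokens and during which no tokens are added. *)

theory Defs
  imports "HOL-Analysis.Analysis"
begin

definition sysf ::
  "('a::real_vector \<Rightarrow> 'b::real_vector \<Rightarrow> 'a) \<Rightarrow> int \<Rightarrow> int \<Rightarrow> int \<Rightarrow>
   ('a \<times> 'b \<times> real) \<Rightarrow> ('b \<times> real \<times> real) \<Rightarrow> ('a \<times> 'b \<times> real)" where
  "sysf fp g c b x u =
     (case x of (xp, us, \<beta>) \<Rightarrow> case u of (uc, \<gamma>, \<delta>) \<Rightarrow>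
        (let v = (\<gamma> + \<delta>) *\<^sub>R uc + (1 - \<gamma> - \<delta>) *\<^sub>R us
         in (fp xp v, v, min (\<beta> + (1 - \<delta>) * real_of_int g - \<gamma> * real_of_int c) (real_of_int b))))"

definition kappa :: "('a \<Rightarrow> 'b::real_vector) \<Rightarrow> nat \<Rightarrow> ('a \<times> 'b \<times> real) \<Rightarrow> ('b \<times> real \<times> real)" where
  "kappa kp j x = (if j = 0 then (kp (fst x), 0, 1) else (0, 0, 0))"

primrec traj ::
  "('a::real_vector \<Rightarrow> 'b::real_vector \<Rightarrow> 'a) \<Rightarrow> ('a \<Rightarrow> 'b) \<Rightarrow> int \<Rightarrow> int \<Rightarrow> int \<Rightarrow> nat \<Rightarrow> nat \<Rightarrow>
   ('a \<times> 'b \<times> real) \<Rightarrow> ('a \<times> 'b \<times> real)" where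
  "traj fp kp g c b q 0 x = x"
| "traj fp kp g c b q (Suc i) x =
     sysf fp g c b (traj fp kp g c b q i x) (kappa kp (i mod q) (traj fp kp g c b q i x))"

definition ell_beta :: "real \<Rightarrow> int \<Rightarrow> real \<Rightarrow> real" where
  "ell_beta \<psi> b \<beta> = \<psi> * ((real_of_int b)\<^sup>2 - \<beta>\<^sup>2)"

end

theory Submission
  imports Defs
begin

lemma sq_sum_aux: "(\<Sum>i<Suc m. (real (i - 1))^2) = (real (Suc m) - 1) * (real (Suc m) - 2) * (2 * real (Suc m) - 3) / 6"
proof (induction m)
  case 0 then show ?case by simp
next
  case (Suc m)
  have "(\<Sum>i<Suc (Suc m). (real (i - 1))^2) = (\<Sum>i<Suc m. (real (i - 1))^2) + (real m)^2"
    by simp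
  also have "... = (real (Suc (Suc m)) - 1) * (real (Suc (Suc m)) - 2) * (2 * real (Suc (Suc m)) - 3) / 6"
    using Suc by (simp add: field_simps power2_eq_square)
  finally show ?case .
qed

theorem lemma4:
  fixes g c b :: int and q :: nat and \<psi> :: real
    and Xp :: "(real^'n) set" and Up :: "(real^'m) set"
    and fp :: "real^'n \<Rightarrow> real^'m \<Rightarrow> real^'n"
    and Xf :: "(real^'n) set" and kp :: "real^'n \<Rightarrow> real^'m"
    and x :: "(real^'n) \<times> (real^'m) \<times> real"
  assumes "g \<ge> 1" and "c \<ge> g" and "b \<ge> c"
    and q_def: "q = nat \<lceil>real_of_int c / real_of_int g\<rceil>" and "q \<ge> 2"
    and "(int q - 1) * g \<le> b"
    and "\<psi> > 0"
    and "closed Xp" and "closed Up" and "0 \<in> Xp" and "0 \<in> Up"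
    and "fp 0 0 = 0"
    and "Xf \<subseteq> Xp" and "\<forall>y\<in>Xf. kp y \<in> Up"
    and "x \<in> Xf \<times> Up \<times> {0}"
  shows "(\<Sum>i<q. ell_beta \<psi> b (snd (snd (traj fp kp g c b q i x))))
         = \<psi> * (real q * (real_of_int b)\<^sup>2
               - (1/6) * (real_of_int g)\<^sup>2 * (real q - 1) * (real q - 2) * (2 * real q - 3))"
proof -
  obtain xp us where x: "x = (xp, us, 0)" using assms(15) by auto
  have beta: "snd (snd (traj fp kp g c b q i x)) = real (i - 1) * real_of_int g" if "i < q" for i
    using that
  proof (induction i)
    case 0 then show ?case by (simp add: x)
  next
    case (Suc i)
    have im: "i mod q = i" using Suc.prems by simp
    have IH: "snd (snd (traj fp kp g c b q i x)) = real (i - 1) * real_of_int g"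
      using Suc by simp
    show ?case
    proof (cases "i = 0")
      case True
      have "b \<ge> 0" using assms(1,2,3) by linarith
      then show ?thesis using IH im True
        by (auto simp: sysf_def kappa_def x Let_def split: prod.splits)
    next
      case False
      have le: "real i * real_of_int g \<le> real_of_int b"
      proof -
        have "int i * g \<le> (int q - 1) * g"
          using Suc.prems assms(1) by (intro mult_right_mono) auto
        then have "int i * g \<le> b" using assms(6) by linarith
        then show ?thesis
          by (metis of_int_le_iff of_int_mult of_int_of_nat_eq)
      qed
      have e: "real (i - 1) * real_of_int g + real_of_int g = real i * real_of_int g"
        using False by (simp add: of_nat_diff algebra_simps)
      obtain a1 a2 a3 where tr: "traj fp kp g c b q i x = (a1, a2, a3)" by (metis prod.exhaust)
      show ?thesis using IH im False le e
        by (simp add: sysf_def kappa_def tr Let_def)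
    qed
  qed
  obtain m where qm: "q = Suc m" using assms(5) by (cases q) auto
  have "(\<Sum>i<q. ell_beta \<psi> b (snd (snd (traj fp kp g c b q i x))))
      = (\<Sum>i<q. \<psi> * (real_of_int b)\<^sup>2 - \<psi> * (real_of_int g)\<^sup>2 * (real (i - 1))^2)"
    by (rule sum.cong) (auto simp: beta ell_beta_def power_mult_distrib algebra_simps)
  also have "... = real q * (\<psi> * (real_of_int b)\<^sup>2) - \<psi> * (real_of_int g)\<^sup>2 * (\<Sum>i<q. (real (i - 1))^2)"
    by (simp add: sum_subtractf sum_distrib_left)
  also have "... = \<psi> * (real q * (real_of_int b)\<^sup>2
               - (1/6) * (real_of_int g)\<^sup>2 * (real q - 1) * (real q - 2) * (2 * real q - 3))"
    unfolding qm sq_sum_aux by (simp add: algebra_simps)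
  finally show ?thesis .
qed

end
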